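(* For every $\alpha\in(0,\pi/2)$ and every good input, the cost of the Straight-Up algorithm equals $\cot\alpha$.
   Context: A drone with half angle-of-view $\alpha\in(0,\pi/2)$ at a point $(t_x,t_y)$, $t_y\ge0$, covers $[t_x-t_y\tan\alpha,t_x+t_y\tan\alpha]$ on the $x$-axis. An input is a sequence $X_0=(0,0),X_1,\dots,X_n$ ($n\ge1$) of points $X_i=(x_i,0)$ revealed online. A solution is a sequence of positions $P_0=(0,0),P_1,\dots,P_n$ in the closed upper half-plane with $P_i$ covering $X_0,\dots,X_i$; its cost is $\sum_i|P_iP_{i+1}|$. A request $X_{i+1}$ is redundant if $x_{i+1}\in[\min_{j\le i}x_j,\max_{j\le i}x_j]$. An input is good if it has no redundant requests, $\min_j x_j=-1$ and $\max_j x_j\in[0,1]$. The Straight-Up algorithm sets $P_i$ to be the lowest point of the $y$-axis that covers $X_0,\dots,X_i$. *)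

theory Defs
  imports "HOL-Analysis.Analysis"
begin

text \<open>Points of the plane are pairs (x, y) :: real \<times> real; dist on pairs is the
Euclidean distance. Requests are X_i = (x i, 0), given by x :: nat \<Rightarrow> real.\<close>

definition covers :: "real \<Rightarrow> real \<times> real \<Rightarrow> real \<Rightarrow> bool" where
  "covers \<alpha> T p \<longleftrightarrow> snd T \<ge> 0 \<and>
     fst T - snd T * tan \<alpha> \<le> p \<and> p \<le> fst T + snd T * tan \<alpha>"

definition redundant :: "(nat \<Rightarrow> real) \<Rightarrow> nat \<Rightarrow> bool" where
  "redundant x i \<longleftrightarrow>
     x (Suc i) \<in> {Min (x ` {0..i}) .. Max (x ` {0..i})}"

definition good_input :: "(nat \<Rightarrow> real) \<Rightarrow> nat \<Rightarrow> bool" where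
  "good_input x n \<longleftrightarrow> n \<ge> 1 \<and> x 0 = 0 \<and>
     (\<forall>i<n. \<not> redundant x i) \<and>
     Min (x ` {0..n}) = -1 \<and> Max (x ` {0..n}) \<in> {0..1}"

definition cost :: "(nat \<Rightarrow> real \<times> real) \<Rightarrow> nat \<Rightarrow> real" where
  "cost P n = (\<Sum>i<n. dist (P i) (P (Suc i)))"

definition straight_up :: "real \<Rightarrow> (nat \<Rightarrow> real) \<Rightarrow> nat \<Rightarrow> real \<times> real" where
  "straight_up \<alpha> x i = (0, Inf {h. \<forall>j\<le>i. covers \<alpha> (0, h) (x j)})"

end

theory Submission
  imports Defs
begin

lemma su_height:
  assumes t: "tan \<alpha> > 0"
  shows "straight_up \<alpha> x i = (0, Max ((\<lambda>j. \<bar>x j\<bar>) ` {0..i}) / tan \<alpha>)"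
proof -
  let ?m = "Max ((\<lambda>j. \<bar>x j\<bar>) ` {0..i}) / tan \<alpha>"
  have "{h. \<forall>j\<le>i. covers \<alpha> (0, h) (x j)} = {?m..}"
  proof (intro set_eqI iffI)
    fix h assume "h \<in> {h. \<forall>j\<le>i. covers \<alpha> (0, h) (x j)}"
    hence H: "\<And>j. j \<le> i \<Longrightarrow> h \<ge> 0 \<and> - (h * tan \<alpha>) \<le> x j \<and> x j \<le> h * tan \<alpha>"
      by (auto simp: covers_def)
    have "Max ((\<lambda>j. \<bar>x j\<bar>) ` {0..i}) \<le> h * tan \<alpha>"
      using H by (subst Max_le_iff) (auto simp: abs_le_iff, smt (verit) H)
    thus "h \<in> {?m..}" using t by (simp add: divide_le_eq)
  next
    fix h assume "h \<in> {?m..}"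
    hence h: "Max ((\<lambda>j. \<bar>x j\<bar>) ` {0..i}) \<le> h * tan \<alpha>" using t by (simp add: divide_le_eq)
    have "\<And>j. j \<le> i \<Longrightarrow> \<bar>x j\<bar> \<le> h * tan \<alpha>"
      using h by (subst (asm) Max_le_iff) auto
    moreover have "0 \<le> h * tan \<alpha>" using h[unfolded Max_le_iff[OF finite_imageI[OF finite_atLeastAtMost]]]
      by force
    hence "h \<ge> 0" using t by (simp add: zero_le_mult_iff)
    ultimately show "h \<in> {h. \<forall>j\<le>i. covers \<alpha> (0, h) (x j)}"
      by (auto simp: covers_def abs_le_iff) (smt (verit))
  qed
  thus ?thesis by (simp add: straight_up_def cInf_atLeast)
qed

theorem lemma3:
  fixes \<alpha> :: real and x :: "nat \<Rightarrow> real" and n :: nat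
  assumes "0 < \<alpha>" and "\<alpha> < pi / 2"
    and "good_input x n"
  shows "cost (straight_up \<alpha> x) n = cot \<alpha>"
proof -
  have t: "tan \<alpha> > 0" using assms by (simp add: tan_gt_zero)
  define m where "m i = Max ((\<lambda>j. \<bar>x j\<bar>) ` {0..i})" for i
  have mono: "m i \<le> m (Suc i)" for i
    unfolding m_def by (rule Max_mono) auto
  have "cost (straight_up \<alpha> x) n = (\<Sum>i<n. m (Suc i) / tan \<alpha> - m i / tan \<alpha>)"
    unfolding cost_def su_height[OF t] m_def[symmetric]
    by (intro sum.cong refl) (use mono t in \<open>auto simp: dist_Pair_Pair dist_real_def divide_right_mono\<close>)
  also have "\<dots> = m n / tan \<alpha> - m 0 / tan \<alpha>" by (rule sum_lessThan_telescope)
  also have "m 0 = 0" using assms(3) by (simp add: m_def good_input_def)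
  also have "m n = 1"
  proof -
    have g: "Min (x ` {0..n}) = -1" "Max (x ` {0..n}) \<le> 1" using assms(3) by (auto simp: good_input_def)
    have lo: "\<And>j. j \<le> n \<Longrightarrow> -1 \<le> x j" using g(1) by (metis Min_le atLeastAtMost_iff finite_atLeastAtMost finite_imageI image_eqI le0)
    have hi: "\<And>j. j \<le> n \<Longrightarrow> x j \<le> 1" using g(2) by (meson Max_ge atLeastAtMost_iff finite_atLeastAtMost finite_imageI image_eqI le0 order_trans)
    have "-1 \<in> x ` {0..n}" unfolding g(1)[symmetric] by (rule Min_in) auto
    then obtain k where k: "k \<le> n" "x k = -1" by auto
    show ?thesis unfolding m_def
    proof (rule antisym)
      show "Max ((\<lambda>j. \<bar>x j\<bar>) ` {0..n}) \<le> 1" using lo hi by (subst Max_le_iff) (auto simp: abs_le_iff)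
      show "1 \<le> Max ((\<lambda>j. \<bar>x j\<bar>) ` {0..n})" using k by (intro Max_ge_iff[THEN iffD2]) force+
    qed
  qed
  finally show ?thesis by (simp add: cot_def tan_def)
qed

end
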